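(* Let $\mathcal{R}^{rsc}$ be a rich single-crossing domain and $F:\mathcal{R}^{rsc}\to\mathbb{Z}$ a mechanism such that $F$ is monotone, $V^F$ is continuous, and the range $Rn(F)$ is finite. Then $F$ is strategy-proof. (The same holds when $\mathcal{R}^{rsc}$ is replaced by a closed interval $[\underline R,\overline R]\subseteq\mathcal{R}^{rsc}$.)
   Context: $\mathbb{Z}=[0,\infty)\times[0,1]$; $(t',q')<(t'',q'')$ means $t'<t''$, $q'<q''$; $x\le y$ means $x=y$ or $x<y$; $\square(z)=\{x:x\le z\}$. A classical preference is a complete transitive relation $R$ on $\mathbb{Z}$ (strict part $P$, indifference $I$) strictly decreasing in $t$ for fixed $q$, strictly increasing in $q$ for fixed $t$, with closed upper and lower contour sets. Distinct classical preferences satisfy single-crossing if any indifference set of one meets any indifference set of the other in at most one point. A rich single-crossing domain $\mathcal{R}^{rsc}$ is a set of pairwise single-crossing classical preferences such that for all $x'<x''$ some member is indifferent between them. For distinct members, $R'\prec R''$ means $\square(z)\cap\{x:xR''z\}\subseteq\square(z)\cap\{x:xR'z\}$ for all $z$; $\prec$ is a linear order and $\mathcal{R}^{rsc}$ has the order topology. A mechanism $F$ maps the domain into $\mathbb{Z}$; it is strategy-proof if $F(R')R'F(R'')$ for all $R',R''$, and monotone if $R'\prec R''$ implies $F(R')\le F(R'')$. $V^F(R)=\{z: zIF(R)\}$ is continuous if for every $R$ and every monotone sequence $R^n\to R$ in the order topology (i.e. $R^n\precsim R^{n+1}$ for all $n$, or $R^{n+1}\precsim R^n$ for all $n$), $F(R^n)$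 converges in $\mathbb{Z}$ and $\lim F(R^n)\,I\,F(R)$. *)

theory Defs
  imports "HOL-Analysis.Analysis"
begin

type_synonym bndl = "real \<times> real"
type_synonym pref = "bndl \<Rightarrow> bndl \<Rightarrow> bool"

definition ZZ :: "bndl set" where
  "ZZ = {(t, q). 0 \<le> t \<and> 0 \<le> q \<and> q \<le> 1}"

definition lessZ :: "bndl \<Rightarrow> bndl \<Rightarrow> bool" where
  "lessZ x y \<longleftrightarrow> fst x < fst y \<and> snd x < snd y"

definition leZ :: "bndl \<Rightarrow> bndl \<Rightarrow> bool" where
  "leZ x y \<longleftrightarrow> x = y \<or> lessZ x y"

definition boxZ :: "bndl \<Rightarrow> bndl set" where
  "boxZ z = {x \<in> ZZ. leZ x z}"

definition strictP :: "pref \<Rightarrow> bndl \<Rightarrow> bndl \<Rightarrow> bool" where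
  "strictP R x y \<longleftrightarrow> R x y \<and> \<not> R y x"

definition indiff :: "pref \<Rightarrow> bndl \<Rightarrow> bndl \<Rightarrow> bool" where
  "indiff R x y \<longleftrightarrow> R x y \<and> R y x"

definition classical :: "pref \<Rightarrow> bool" where
  "classical R \<longleftrightarrow>
     (\<forall>x y. R x y \<longrightarrow> x \<in> ZZ \<and> y \<in> ZZ) \<and>
     (\<forall>x\<in>ZZ. \<forall>y\<in>ZZ. R x y \<or> R y x) \<and>
     (\<forall>x\<in>ZZ. \<forall>y\<in>ZZ. \<forall>z\<in>ZZ. R x y \<longrightarrow> R y z \<longrightarrow> R x z) \<and>
     (\<forall>t t' q. (t, q) \<in> ZZ \<longrightarrow> (t', q) \<in> ZZ \<longrightarrow> t < t' \<longrightarrow> strictP R (t, q) (t', q)) \<and>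
     (\<forall>t q q'. (t, q) \<in> ZZ \<longrightarrow> (t, q') \<in> ZZ \<longrightarrow> q < q' \<longrightarrow> strictP R (t, q') (t, q)) \<and>
     (\<forall>z\<in>ZZ. closed {x \<in> ZZ. R x z} \<and> closed {x \<in> ZZ. R z x})"

definition single_crossing :: "pref \<Rightarrow> pref \<Rightarrow> bool" where
  "single_crossing R1 R2 \<longleftrightarrow>
     (\<forall>z1\<in>ZZ. \<forall>z2\<in>ZZ. \<forall>x\<in>ZZ. \<forall>y\<in>ZZ.
        indiff R1 x z1 \<and> indiff R2 x z2 \<and> indiff R1 y z1 \<and> indiff R2 y z2 \<longrightarrow> x = y)"

definition rich_single_crossing :: "pref set \<Rightarrow> bool" where
  "rich_single_crossing D \<longleftrightarrow>
     (\<forall>R\<in>D. classical R) \<and>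
     (\<forall>R1\<in>D. \<forall>R2\<in>D. R1 \<noteq> R2 \<longrightarrow> single_crossing R1 R2) \<and>
     (\<forall>x\<in>ZZ. \<forall>y\<in>ZZ. lessZ x y \<longrightarrow> (\<exists>R\<in>D. indiff R x y))"

definition prec :: "pref \<Rightarrow> pref \<Rightarrow> bool" where
  "prec R1 R2 \<longleftrightarrow> R1 \<noteq> R2 \<and>
     (\<forall>z\<in>ZZ. boxZ z \<inter> {x. R2 x z} \<subseteq> boxZ z \<inter> {x. R1 x z})"

definition preceq :: "pref \<Rightarrow> pref \<Rightarrow> bool" where
  "preceq R1 R2 \<longleftrightarrow> R1 = R2 \<or> prec R1 R2"

text \<open>Convergence in the order topology of the linearly ordered set S:
  every open ray of S containing the limit eventually contains the sequence.\<close>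
definition order_converges :: "pref set \<Rightarrow> (nat \<Rightarrow> pref) \<Rightarrow> pref \<Rightarrow> bool" where
  "order_converges S Rs R \<longleftrightarrow>
     (\<forall>A\<in>S. prec A R \<longrightarrow> (\<exists>N. \<forall>n\<ge>N. prec A (Rs n))) \<and>
     (\<forall>B\<in>S. prec R B \<longrightarrow> (\<exists>N. \<forall>n\<ge>N. prec (Rs n) B))"

definition monotone_seq :: "(nat \<Rightarrow> pref) \<Rightarrow> bool" where
  "monotone_seq Rs \<longleftrightarrow> (\<forall>n. preceq (Rs n) (Rs (Suc n))) \<or> (\<forall>n. preceq (Rs (Suc n)) (Rs n))"

definition strategy_proof :: "pref set \<Rightarrow> (pref \<Rightarrow> bndl) \<Rightarrow> bool" where
  "strategy_proof S F \<longleftrightarrow> (\<forall>R1\<in>S. \<forall>R2\<in>S. R1 (F R1) (F R2))"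

definition monotone_mech :: "pref set \<Rightarrow> (pref \<Rightarrow> bndl) \<Rightarrow> bool" where
  "monotone_mech S F \<longleftrightarrow> (\<forall>R1\<in>S. \<forall>R2\<in>S. prec R1 R2 \<longrightarrow> leZ (F R1) (F R2))"

definition VF_continuous :: "pref set \<Rightarrow> (pref \<Rightarrow> bndl) \<Rightarrow> bool" where
  "VF_continuous S F \<longleftrightarrow>
     (\<forall>R\<in>S. \<forall>Rs. (\<forall>n. Rs n \<in> S) \<and> monotone_seq Rs \<and> order_converges S Rs R \<longrightarrow>
        (\<exists>L\<in>ZZ. (\<lambda>n. F (Rs n)) \<longlonglongrightarrow> L \<and> indiff R L (F R)))"

definition mechanism :: "pref set \<Rightarrow> (pref \<Rightarrow> bndl) \<Rightarrow> bool" where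
  "mechanism S F \<longleftrightarrow> (\<forall>R\<in>S. F R \<in> ZZ)"

definition closed_interval :: "pref set \<Rightarrow> pref \<Rightarrow> pref \<Rightarrow> pref set" where
  "closed_interval D Rlo Rhi = {R \<in> D. preceq Rlo R \<and> preceq R Rhi}"

end

theory Submission
  imports Defs
begin


lemma cl_ZZ: "classical R \<Longrightarrow> R x y \<Longrightarrow> x \<in> ZZ \<and> y \<in> ZZ"
  unfolding classical_def by blast
lemma cl_complete: "classical R \<Longrightarrow> x \<in> ZZ \<Longrightarrow> y \<in> ZZ \<Longrightarrow> R x y \<or> R y x"
  unfolding classical_def by blast
lemma cl_refl: "classical R \<Longrightarrow> x \<in> ZZ \<Longrightarrow> R x x"
  using cl_complete by blast
lemma cl_trans: "classical R \<Longrightarrow> R x y \<Longrightarrow> R y z \<Longrightarrow> R x z"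
  unfolding classical_def by blast
lemma cl_closed1: "classical R \<Longrightarrow> z \<in> ZZ \<Longrightarrow> closed {x \<in> ZZ. R x z}"
  unfolding classical_def by blast
lemma cl_closed2: "classical R \<Longrightarrow> z \<in> ZZ \<Longrightarrow> closed {x \<in> ZZ. R z x}"
  unfolding classical_def by blast

lemma ZZ_iff: "(t,q) \<in> ZZ \<longleftrightarrow> 0 \<le> t \<and> 0 \<le> q \<and> q \<le> 1"
  by (simp add: ZZ_def)

lemma closed_ZZ: "closed ZZ"
proof -
  have "ZZ = {p. 0 \<le> fst p} \<inter> {p. 0 \<le> snd p} \<inter> {p. snd p \<le> (1::real)}"
    by (auto simp: ZZ_def)
  moreover have "closed {p. 0 \<le> fst (p::bndl)}" by (intro closed_Collect_le continuous_intros)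
  moreover have "closed {p. 0 \<le> snd (p::bndl)}" by (intro closed_Collect_le continuous_intros)
  moreover have "closed {p. snd (p::bndl) \<le> 1}" by (intro closed_Collect_le continuous_intros)
  ultimately show ?thesis by (metis closed_Int)
qed

lemma cl_dom:
  assumes R: "classical R" and x: "x \<in> ZZ" and y: "y \<in> ZZ"
    and le1: "fst x \<le> fst y" and le2: "snd y \<le> snd x"
  shows "R x y"
proof -
  obtain t q where xe: "x = (t,q)" by (cases x)
  obtain t' q' where ye: "y = (t',q')" by (cases y)
  have m: "(t, q') \<in> ZZ" using x y by (auto simp: xe ye ZZ_def)
  have 1: "R (t,q) (t,q')"
  proof (cases "q' < q")
    case True then show ?thesis using R x m unfolding classical_def strictP_def xe by blast
  next
    case False then have "q = q'" using le2 xe ye by auto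
    then show ?thesis using cl_refl[OF R m] by simp
  qed
  have 2: "R (t,q') (t',q')"
  proof (cases "t < t'")
    case True then show ?thesis using R y m unfolding classical_def strictP_def ye by blast
  next
    case False then have "t = t'" using le1 xe ye by auto
    then show ?thesis using cl_refl[OF R m] by simp
  qed
  show ?thesis using cl_trans[OF R 1 2] xe ye by simp
qed

lemma cl_dom_strict:
  assumes R: "classical R" and x: "x \<in> ZZ" and y: "y \<in> ZZ"
    and le1: "fst x \<le> fst y" and le2: "snd y \<le> snd x" and ne: "x \<noteq> y"
  shows "\<not> R y x"
proof
  assume yx: "R y x"
  obtain t q where xe: "x = (t,q)" by (cases x)
  obtain t' q' where ye: "y = (t',q')" by (cases y)
  have m: "(t, q') \<in> ZZ" using x y by (auto simp: xe ye ZZ_def)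
  have 1: "R (t,q) (t,q')" and 2: "R (t,q') (t',q')"
    using cl_dom[OF R x m] cl_dom[OF R m y] xe ye le1 le2 by auto
  show False
  proof (cases "q' < q")
    case True
    then have "\<not> R (t,q') (t,q)" using R x m unfolding classical_def strictP_def xe by blast
    moreover have "R (t,q') (t,q)" using cl_trans[OF R 2] yx xe ye by simp
    ultimately show False by simp
  next
    case False then have "q = q'" using le2 xe ye by auto
    then have "t < t'" using ne le1 xe ye by auto
    then have "\<not> R (t',q') (t,q')" using R y m unfolding classical_def strictP_def ye by blast
    moreover have "R (t',q') (t,q')" using yx xe ye \<open>q = q'\<close> by simp
    ultimately show False by simp
  qed
qed

lemma cl_ev1:
  assumes R: "classical R" and z: "z \<in> ZZ" and xs: "\<And>n. xs n \<in> ZZ" and lim: "xs \<longlonglongrightarrow> x"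
    and nx: "\<not> R x z"
  shows "eventually (\<lambda>n. \<not> R (xs n) z) sequentially"
proof -
  have "open (- {y \<in> ZZ. R y z})" using cl_closed1[OF R z] by auto
  moreover have "x \<in> - {y \<in> ZZ. R y z}" using nx by auto
  ultimately have "eventually (\<lambda>n. xs n \<in> - {y \<in> ZZ. R y z}) sequentially"
    by (rule topological_tendstoD[OF lim])
  then show ?thesis using xs by (auto elim: eventually_mono)
qed

lemma cl_ev2:
  assumes R: "classical R" and z: "z \<in> ZZ" and xs: "\<And>n. xs n \<in> ZZ" and lim: "xs \<longlonglongrightarrow> x"
    and nx: "\<not> R z x"
  shows "eventually (\<lambda>n. \<not> R z (xs n)) sequentially"
proof -
  have "open (- {y \<in> ZZ. R z y})" using cl_closed2[OF R z] by auto
  moreover have "x \<in> - {y \<in> ZZ. R z y}" using nx by auto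
  ultimately have "eventually (\<lambda>n. xs n \<in> - {y \<in> ZZ. R z y}) sequentially"
    by (rule topological_tendstoD[OF lim])
  then show ?thesis using xs by (auto elim: eventually_mono)
qed

lemma cl_graph_closed:
  assumes R: "classical R"
  shows "closed {p. R (fst p) (snd p)}"
  unfolding closed_sequential_limits
proof (intro allI impI, elim conjE)
  fix s l assume sR: "\<forall>n. s n \<in> {p. R (fst p) (snd p)}" and lim: "s \<longlonglongrightarrow> l"
  define a where "a = (\<lambda>n. fst (s n))"
  define b where "b = (\<lambda>n. snd (s n))"
  have ab: "R (a n) (b n)" for n using sR by (auto simp: a_def b_def)
  have aZ: "a n \<in> ZZ" and bZ: "b n \<in> ZZ" for n using cl_ZZ[OF R ab] by auto
  have la: "a \<longlonglongrightarrow> fst l" unfolding a_def by (intro tendsto_fst lim)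
  have lb: "b \<longlonglongrightarrow> snd l" unfolding b_def by (intro tendsto_snd lim)
  have laZ: "fst l \<in> ZZ" using closed_ZZ la aZ closed_sequentially by blast
  have lbZ: "snd l \<in> ZZ" using closed_ZZ lb bZ closed_sequentially by blast
  show "l \<in> {p. R (fst p) (snd p)}"
  proof (rule ccontr)
    assume "l \<notin> {p. R (fst p) (snd p)}"
    then have n: "\<not> R (fst l) (snd l)" by simp
    then have ba: "R (snd l) (fst l)" using cl_complete[OF R laZ lbZ] by blast
    show False
    proof (cases "\<exists>w\<in>ZZ. \<not> R w (snd l) \<and> \<not> R (fst l) w")
      case True
      then obtain w where wZ: "w \<in> ZZ" and w1: "\<not> R w (snd l)" and w2: "\<not> R (fst l) w" by blast
      have e1: "eventually (\<lambda>n. \<not> R w (b n)) sequentially" by (rule cl_ev2[OF R wZ bZ lb w1])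
      have e2: "eventually (\<lambda>n. \<not> R (a n) w) sequentially" by (rule cl_ev1[OF R wZ aZ la w2])
      from eventually_conj[OF e1 e2] obtain n where "\<not> R w (b n)" "\<not> R (a n) w"
        using eventually_sequentially by auto
      then show False using ab cl_trans[OF R] cl_complete[OF R] aZ bZ wZ by metis
    next
      case False
      have e1: "eventually (\<lambda>n. \<not> R (fst l) (b n)) sequentially" by (rule cl_ev2[OF R laZ bZ lb n])
      have e2: "eventually (\<lambda>n. \<not> R (a n) (snd l)) sequentially" by (rule cl_ev1[OF R lbZ aZ la n])
      from eventually_conj[OF e1 e2] obtain n where h1: "\<not> R (fst l) (b n)" and h2: "\<not> R (a n) (snd l)"
        using eventually_sequentially by auto
      have "R (fst l) (a n)"
      proof (rule ccontr)
        assume "\<not> R (fst l) (a n)"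
        then show False using False aZ[of n] h2 by blast
      qed
      then show False using ab h1 cl_trans[OF R] by blast
    qed
  qed
qed



definition gam :: "real \<Rightarrow> real \<Rightarrow> bndl" where
  "gam q0 l = (max (-l) 0, q0 + max l 0)"

lemma gam_ZZ: "0 \<le> q0 \<Longrightarrow> q0 + max l 0 \<le> 1 \<Longrightarrow> gam q0 l \<in> ZZ"
  by (auto simp: gam_def ZZ_def)

lemma gam_ZZ_D: "gam q0 l \<in> ZZ \<Longrightarrow> q0 + max l 0 \<le> 1"
  by (auto simp: gam_def ZZ_def)

lemma gam_cont: "continuous_on A (\<lambda>l. gam q0 l)"
  unfolding gam_def by (intro continuous_intros)

lemma gam_neg: "0 \<le> t \<Longrightarrow> gam q0 (-t) = (t, q0)"
  by (auto simp: gam_def)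

lemma gam_strict:
  assumes R: "classical R" and q0: "0 \<le> q0" and ml: "m < l" and Z: "gam q0 l \<in> ZZ"
  shows "\<not> R (gam q0 m) (gam q0 l)"
proof -
  have Z2: "gam q0 m \<in> ZZ" using Z ml q0 by (auto simp: gam_def ZZ_def)
  show ?thesis
    by (rule cl_dom_strict[OF R Z Z2]) (use ml in \<open>auto simp: gam_def\<close>)
qed

lemma gam_weak:
  assumes R: "classical R" and q0: "0 \<le> q0" and ml: "m \<le> l" and Z: "gam q0 l \<in> ZZ"
  shows "R (gam q0 l) (gam q0 m)"
proof -
  have Z2: "gam q0 m \<in> ZZ" using Z ml q0 by (auto simp: gam_def ZZ_def)
  show ?thesis
    by (rule cl_dom[OF R Z Z2]) (use ml in \<open>auto simp: gam_def\<close>)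
qed

lemma gam_uniq:
  assumes R: "classical R" and q0: "0 \<le> q0"
    and a: "indiff R (gam q0 l) v" and b: "indiff R (gam q0 m) v"
  shows "l = m"
proof (rule ccontr)
  assume "l \<noteq> m"
  then consider "m < l" | "l < m" by linarith
  then show False
  proof cases
    case 1
    have Z: "gam q0 l \<in> ZZ" using a cl_ZZ[OF R] unfolding indiff_def by blast
    have "R (gam q0 m) (gam q0 l)" using a b cl_trans[OF R] unfolding indiff_def by blast
    then show False using gam_strict[OF R q0 1 Z] by simp
  next
    case 2
    have Z: "gam q0 m \<in> ZZ" using b cl_ZZ[OF R] unfolding indiff_def by blast
    have "R (gam q0 l) (gam q0 m)" using a b cl_trans[OF R] unfolding indiff_def by blast
    then show False using gam_strict[OF R q0 2 Z] by simp
  qed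
qed

lemma gam_root:
  assumes R: "classical R" and v: "v \<in> ZZ" and tv: "0 < fst v" and q0: "0 \<le> q0" "q0 < snd v"
  shows "\<exists>l. - fst v < l \<and> l < snd v - q0 \<and> indiff R (gam q0 l) v"
proof -
  define I where "I = {- fst v .. snd v - q0}"
  define A where "A = I \<inter> (gam q0) -` {x \<in> ZZ. R v x}"
  define B where "B = I \<inter> (gam q0) -` {x \<in> ZZ. R x v}"
  have sv: "snd v \<le> 1" using v by (cases v) (auto simp: ZZ_def)
  have IZ: "gam q0 l \<in> ZZ" if "l \<in> I" for l
    using that q0 sv tv by (intro gam_ZZ) (auto simp: I_def)
  have cA: "closed A" unfolding A_def I_def
    by (intro continuous_closed_preimage gam_cont closed_atLeastAtMost cl_closed2[OF R v])
  have cB: "closed B" unfolding B_def I_def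
    by (intro continuous_closed_preimage gam_cont closed_atLeastAtMost cl_closed1[OF R v])
  have cov: "I \<subseteq> A \<union> B"
  proof
    fix l assume "l \<in> I"
    then show "l \<in> A \<union> B" using IZ[of l] cl_complete[OF R IZ[of l] v] by (auto simp: A_def B_def)
  qed
  have lI: "- fst v \<in> I" and rI: "snd v - q0 \<in> I" using tv q0 by (auto simp: I_def)
  have gl: "gam q0 (- fst v) = (fst v, q0)" using tv by (simp add: gam_neg)
  have gr: "gam q0 (snd v - q0) = (0, snd v)" using q0 by (auto simp: gam_def)
  have lZ: "(fst v, q0) \<in> ZZ" using IZ[OF lI] gl by simp
  have rZ: "(0, snd v) \<in> ZZ" using IZ[OF rI] gr by simp
  have l1: "R v (fst v, q0)" by (rule cl_dom[OF R v lZ]) (use q0 in auto)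
  have l2: "\<not> R (fst v, q0) v" by (rule cl_dom_strict[OF R v lZ]) (use q0 in \<open>auto simp: prod_eq_iff\<close>)
  have r1: "R (0, snd v) v" by (rule cl_dom[OF R rZ v]) (use tv in auto)
  have r2: "\<not> R v (0, snd v)" by (rule cl_dom_strict[OF R rZ v]) (use tv in \<open>auto simp: prod_eq_iff\<close>)
  have "A \<inter> I \<noteq> {}" using lI l1 lZ gl by (auto simp: A_def)
  moreover have "B \<inter> I \<noteq> {}" using rI r1 rZ gr by (auto simp: B_def)
  ultimately have "A \<inter> B \<inter> I \<noteq> {}"
    using connected_closedD[of I A B] cA cB cov by (auto simp: I_def)
  then obtain l where lI': "l \<in> I" and la: "R v (gam q0 l)" and lb: "R (gam q0 l) v"
    by (auto simp: A_def B_def)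
  have "l \<noteq> - fst v" using lb l2 gl by auto
  moreover have "l \<noteq> snd v - q0" using la r2 gr by auto
  ultimately have "- fst v < l \<and> l < snd v - q0" using lI' by (auto simp: I_def)
  then show ?thesis using la lb unfolding indiff_def by blast
qed



lemma conv_lt:
  fixes a b c d s :: real
  assumes "a < c" "b < d" "0 \<le> s" "s \<le> 1"
  shows "(1-s)*a + s*b < (1-s)*c + s*d"
proof (cases "s = 0")
  case True then show ?thesis using assms by simp
next
  case False
  then have "s*b < s*d" using assms by (intro mult_strict_left_mono) auto
  moreover have "(1-s)*a \<le> (1-s)*c" using assms by (intro mult_left_mono) auto
  ultimately show ?thesis by linarith
qed

lemma conv_le:
  fixes a b c d s :: real
  assumes "a \<le> c" "b \<le> d" "0 \<le> s" "s \<le> 1"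
  shows "(1-s)*a + s*b \<le> (1-s)*c + s*d"
proof -
  have "s*b \<le> s*d" using assms by (intro mult_left_mono) auto
  moreover have "(1-s)*a \<le> (1-s)*c" using assms by (intro mult_left_mono) auto
  ultimately show ?thesis by linarith
qed

lemma cross_contra:
  assumes R1: "classical R1" and R2: "classical R2" and sc: "single_crossing R1 R2"
    and xZ: "x \<in> ZZ" and zZ: "z \<in> ZZ" and xz: "lessZ x z" and w1: "R2 x z" and w2: "\<not> R1 x z"
    and xZ': "x' \<in> ZZ" and zZ': "z' \<in> ZZ" and xz': "lessZ x' z'" and w1': "R1 x' z'" and w2': "\<not> R2 x' z'"
  shows False
proof -
  obtain tx qx where xe: "x = (tx,qx)" by (cases x)
  obtain tz qz where ze: "z = (tz,qz)" by (cases z)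
  obtain tx' qx' where xe': "x' = (tx',qx')" by (cases x')
  obtain tz' qz' where ze': "z' = (tz',qz')" by (cases z')
  have h1: "0 \<le> tx" "tx < tz" "0 \<le> qx" "qx < qz" "qz \<le> 1"
    using xZ zZ xz by (auto simp: xe ze ZZ_def lessZ_def)
  have h2: "0 \<le> tx'" "tx' < tz'" "0 \<le> qx'" "qx' < qz'" "qz' \<le> 1"
    using xZ' zZ' xz' by (auto simp: xe' ze' ZZ_def lessZ_def)
  define v where "v = (\<lambda>s::real. ((1-s)*tz + s*tz', (1-s)*qz + s*qz'))"
  define q0 where "q0 = (\<lambda>s::real. (1-s)*qx + s*qx')"
  define M where "M = max tz tz'"
  have vZ: "v s \<in> ZZ" and tv: "0 < fst (v s)" and q0p: "0 \<le> q0 s" and q0v: "q0 s < snd (v s)"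
    and tM: "fst (v s) \<le> M" and sv1: "snd (v s) \<le> 1"
    if "s \<in> {0..1}" for s
  proof -
    have s: "0 \<le> s" "s \<le> 1" using that by auto
    have a: "0 < (1-s)*tz + s*tz'" using conv_lt[of 0 tz 0 tz' s] h1 h2 s by simp
    have b: "0 \<le> (1-s)*qx + s*qx'" using conv_le[of 0 qx 0 qx' s] h1 h2 s by simp
    have c: "(1-s)*qx + s*qx' < (1-s)*qz + s*qz'" using conv_lt[of qx qz qx' qz' s] h1 h2 s by simp
    have d: "(1-s)*qz + s*qz' \<le> 1" using conv_le[of qz 1 qz' 1 s] h1 h2 s by simp
    have e0: "(1-s)*M + s*M = M" by (simp add: algebra_simps)
    have e: "(1-s)*tz + s*tz' \<le> M" using conv_le[of tz M tz' M s] s e0 by (simp add: M_def)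
    show "v s \<in> ZZ" using a b c d by (auto simp: v_def ZZ_def)
    show "0 < fst (v s)" using a by (simp add: v_def)
    show "0 \<le> q0 s" using b by (simp add: q0_def)
    show "q0 s < snd (v s)" using c by (simp add: q0_def v_def)
    show "fst (v s) \<le> M" using e by (simp add: v_def)
    show "snd (v s) \<le> 1" using d by (simp add: v_def)
  qed
  define P where "P = (\<lambda>s l. - fst (v s) < l \<and> l < snd (v s) - q0 s \<and> indiff R1 (gam (q0 s) l) (v s))"
  have ex1: "\<exists>!l. P s l" if sI: "s \<in> {0..1}" for s
  proof -
    obtain l where "P s l" using gam_root[OF R1 vZ[OF sI] tv[OF sI] q0p[OF sI] q0v[OF sI]]
      unfolding P_def by blast
    moreover have "m = l" if "P s m" "P s l" for m l
      using gam_uniq[OF R1 q0p[OF sI]] that unfolding P_def by blast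
    ultimately show ?thesis by blast
  qed
  define h where "h = (\<lambda>s. THE l. P s l)"
  have hP: "P s (h s)" if "s \<in> {0..1}" for s
    unfolding h_def using theI'[OF ex1[OF that]] .
  have hT: "h \<in> {0..1} \<rightarrow> {-M..1}"
  proof
    fix s :: real assume s: "s \<in> {0..1}"
    show "h s \<in> {-M..1}" using hP[OF s] tM[OF s] q0p[OF s] sv1[OF s] unfolding P_def by auto
  qed
  define G where "G = {p \<in> {0..1::real} \<times> {-M..1::real}.
       indiff R1 (gam (q0 (fst p)) (snd p)) (v (fst p))}"
  have Geq: "(\<lambda>s. (s, h s)) ` {0..1} = G"
  proof
    show "(\<lambda>s. (s, h s)) ` {0..1} \<subseteq> G" using hP hT unfolding G_def P_def by auto
    show "G \<subseteq> (\<lambda>s. (s, h s)) ` {0..1}"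
    proof
      fix p assume p: "p \<in> G"
      obtain s l where pe: "p = (s,l)" by (cases p)
      have s: "s \<in> {0..1}" using p pe by (auto simp: G_def)
      have "l = h s" using gam_uniq[OF R1 q0p[OF s], of l "v s" "h s"] p pe hP[OF s]
        unfolding G_def P_def by auto
      then show "p \<in> (\<lambda>s. (s, h s)) ` {0..1}" using pe s by auto
    qed
  qed
  have contv: "continuous_on A v" for A unfolding v_def by (intro continuous_intros)
  have contq: "continuous_on A q0" for A unfolding q0_def by (intro continuous_intros)
  have contg: "continuous_on A (\<lambda>p. gam (q0 (fst p)) (snd p))" for A
    unfolding gam_def q0_def by (intro continuous_intros)
  have cG: "closed G"
  proof -
    have "G = (({0..1} \<times> {-M..1}) \<inter> (\<lambda>p. (gam (q0 (fst p)) (snd p), v (fst p))) -` {p. R1 (fst p) (snd p)})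
        \<inter> (({0..1} \<times> {-M..1}) \<inter> (\<lambda>p. (v (fst p), gam (q0 (fst p)) (snd p))) -` {p. R1 (fst p) (snd p)})"
      unfolding G_def indiff_def by auto
    moreover have "closed (({0..1::real} \<times> {-M..1::real}) \<inter> (\<lambda>p. (gam (q0 (fst p)) (snd p), v (fst p))) -` {p. R1 (fst p) (snd p)})"
      by (intro continuous_closed_preimage closed_Times closed_atLeastAtMost cl_graph_closed[OF R1]
          continuous_on_Pair contg continuous_on_compose2[OF contv continuous_on_fst]) auto
    moreover have "closed (({0..1::real} \<times> {-M..1::real}) \<inter> (\<lambda>p. (v (fst p), gam (q0 (fst p)) (snd p))) -` {p. R1 (fst p) (snd p)})"
      by (intro continuous_closed_preimage closed_Times closed_atLeastAtMost cl_graph_closed[OF R1]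
          continuous_on_Pair contg continuous_on_compose2[OF contv continuous_on_fst]) auto
    ultimately show ?thesis
      by (simp only: closed_Int)
  qed
  have conth: "continuous_on {0..1} h"
    by (rule continuous_from_closed_graph[OF compact_Icc hT]) (use Geq cG in simp)
  define u where "u = (\<lambda>s. gam (q0 s) (h s))"
  have contu: "continuous_on {0..1} u" unfolding u_def gam_def q0_def
    by (intro continuous_intros conth)
  define A where "A = {0..1} \<inter> (\<lambda>s. (u s, v s)) -` {p. R2 (fst p) (snd p)}"
  define B where "B = {0..1} \<inter> (\<lambda>s. (v s, u s)) -` {p. R2 (fst p) (snd p)}"
  have cA: "closed A" unfolding A_def
    by (intro continuous_closed_preimage closed_atLeastAtMost cl_graph_closed[OF R2] continuous_on_Pair contu contv)
  have cB: "closed B" unfolding B_def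
    by (intro continuous_closed_preimage closed_atLeastAtMost cl_graph_closed[OF R2] continuous_on_Pair contu contv)
  have uZ: "u s \<in> ZZ" if "s \<in> {0..1}" for s
    using hP[OF that] cl_ZZ[OF R1] unfolding P_def indiff_def u_def by blast
  have cov: "{0..1} \<subseteq> A \<union> B"
  proof
    fix s :: real assume s: "s \<in> {0..1}"
    then show "s \<in> A \<union> B" using cl_complete[OF R2 uZ[OF s] vZ[OF s]] by (auto simp: A_def B_def)
  qed
  have s0: "(0::real) \<in> {0..1}" and s1: "(1::real) \<in> {0..1}" by auto
  have v0: "v 0 = z" and q00: "q0 0 = qx" by (auto simp: v_def q0_def ze)
  have v1: "v 1 = z'" and q01: "q0 1 = qx'" by (auto simp: v_def q0_def ze')
  have xg: "x = gam qx (- tx)" using h1 by (simp add: gam_neg xe)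
  have xg': "x' = gam qx' (- tx')" using h2 by (simp add: gam_neg xe')
  have P0: "P 0 (h 0)" and P1: "P 1 (h 1)" using hP s0 s1 by auto
  have "0 \<in> A"
  proof -
    have I: "indiff R1 (gam qx (h 0)) z" using P0 v0 q00 unfolding P_def by simp
    have uZ0: "gam qx (h 0) \<in> ZZ" using I cl_ZZ[OF R1] unfolding indiff_def by blast
    have "\<not> h 0 \<le> - tx"
    proof
      assume "h 0 \<le> - tx"
      then have "R1 (gam qx (-tx)) (gam qx (h 0))"
        using gam_weak[OF R1 h1(3)] xZ xg by auto
      then show False using I w2 xg cl_trans[OF R1] unfolding indiff_def by metis
    qed
    then have "R2 (gam qx (h 0)) x" using gam_weak[OF R2 h1(3) _ uZ0] xg by auto
    then have "R2 (u 0) (v 0)" using w1 cl_trans[OF R2] v0 q00 by (auto simp: u_def)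
    then show ?thesis by (auto simp: A_def)
  qed
  moreover have "1 \<in> B"
  proof -
    have I: "indiff R1 (gam qx' (h 1)) z'" using P1 v1 q01 unfolding P_def by simp
    have "h 1 \<le> - tx'"
    proof (rule ccontr)
      assume "\<not> h 1 \<le> - tx'"
      then have "- tx' < h 1" by simp
      moreover have uZ1: "gam qx' (h 1) \<in> ZZ" using I cl_ZZ[OF R1] unfolding indiff_def by blast
      ultimately have "\<not> R1 (gam qx' (-tx')) (gam qx' (h 1))" using gam_strict[OF R1 h2(3)] by blast
      then show False using I w1' xg' cl_trans[OF R1] unfolding indiff_def by metis
    qed
    then have "R2 x' (gam qx' (h 1))" using gam_weak[OF R2 h2(3)] xZ' xg' by auto
    moreover have "R2 z' x'" using w2' cl_complete[OF R2 xZ' zZ'] by blast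
    ultimately have "R2 (v 1) (u 1)" using cl_trans[OF R2] v1 q01 by (auto simp: u_def)
    then show ?thesis by (auto simp: B_def)
  qed
  ultimately have ne0: "A \<inter> {0..1} \<noteq> {}" "B \<inter> {0..1} \<noteq> {}" by auto
  have "A \<inter> B \<inter> {0..1} \<noteq> {}"
  proof
    assume "A \<inter> B \<inter> {0..1} = {}"
    from connected_closedD[OF connected_Icc this cov cA cB] ne0 show False by blast
  qed
  then obtain s where sABI: "s \<in> A \<inter> B \<inter> {0..1}" by blast
  have s: "s \<in> {0..1}" using sABI by blast
  have sa: "R2 (u s) (v s)" using sABI by (simp add: A_def)
  have sb: "R2 (v s) (u s)" using sABI by (simp add: B_def)
  have I1: "indiff R1 (u s) (v s)" using hP[OF s] unfolding P_def u_def by simp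
  have I2: "indiff R2 (u s) (v s)" using sa sb unfolding indiff_def by simp
  have ne: "u s \<noteq> v s"
  proof
    assume "u s = v s"
    then have "snd (u s) = snd (v s)" by simp
    moreover have "snd (u s) = q0 s + max (h s) 0" by (simp add: u_def gam_def)
    moreover have "h s < snd (v s) - q0 s" "0 < snd (v s) - q0 s" using hP[OF s] q0v[OF s] unfolding P_def by auto
    ultimately show False by linarith
  qed
  have r1: "indiff R1 (v s) (v s)" and r2: "indiff R2 (v s) (v s)"
    using cl_refl[OF R1 vZ[OF s]] cl_refl[OF R2 vZ[OF s]] by (auto simp: indiff_def)
  show False using sc uZ[OF s] vZ[OF s] I1 I2 r1 r2 ne unfolding single_crossing_def by blast
qed

lemma prec_lin:
  assumes R1: "classical R1" and R2: "classical R2" and sc: "single_crossing R1 R2" and ne: "R1 \<noteq> R2"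
  shows "prec R1 R2 \<or> prec R2 R1"
proof (rule ccontr)
  assume "\<not> (prec R1 R2 \<or> prec R2 R1)"
  then have n1: "\<not> prec R1 R2" and n2: "\<not> prec R2 R1" by auto
  from n1 ne obtain z x where zZ: "z \<in> ZZ" and xb: "x \<in> boxZ z" and a1: "R2 x z" and a2: "\<not> R1 x z"
    unfolding prec_def by blast
  from n2 ne obtain z' x' where zZ': "z' \<in> ZZ" and xb': "x' \<in> boxZ z'" and b1: "R1 x' z'" and b2: "\<not> R2 x' z'"
    unfolding prec_def by blast
  have xZ: "x \<in> ZZ" and xz: "lessZ x z"
    using xb a2 cl_refl[OF R1 zZ] unfolding boxZ_def leZ_def by auto
  have xZ': "x' \<in> ZZ" and xz': "lessZ x' z'"
    using xb' b2 cl_refl[OF R2 zZ'] unfolding boxZ_def leZ_def by auto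
  show False by (rule cross_contra[OF R1 R2 sc xZ zZ xz a1 a2 xZ' zZ' xz' b1 b2])
qed



lemma leZ_antisym: "leZ a b \<Longrightarrow> leZ b a \<Longrightarrow> a = b"
  unfolding leZ_def lessZ_def by auto
lemma leZ_less: "leZ a b \<Longrightarrow> a \<noteq> b \<Longrightarrow> lessZ a b"
  unfolding leZ_def by auto

lemma inv_suc_props:
  "0 < inverse (real (Suc n))" "inverse (real (Suc n)) \<le> 1"
  "inverse (real (Suc (Suc n))) \<le> inverse (real (Suc n))"
  by (auto simp: field_simps)

lemma switch_lemma:
  fixes Lam :: "real set" and P :: "real \<Rightarrow> pref" and G :: "real \<Rightarrow> bndl"
  assumes conv: "\<And>a b c. a\<in>Lam \<Longrightarrow> b\<in>Lam \<Longrightarrow> a\<le>c \<Longrightarrow> c\<le>b \<Longrightarrow> c\<in>Lam"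
  and mono: "\<And>m m'. m\<in>Lam \<Longrightarrow> m'\<in>Lam \<Longrightarrow> m \<le> m' \<Longrightarrow> leZ (G m) (G m')"
  and cont: "\<And>m nu. m\<in>Lam \<Longrightarrow> (\<forall>n. nu n \<in> Lam) \<Longrightarrow> (incseq nu \<or> decseq nu) \<Longrightarrow> nu \<longlonglongrightarrow> m
       \<Longrightarrow> \<exists>L. (\<lambda>n. G (nu n)) \<longlonglongrightarrow> L \<and> indiff (P m) L (G m)"
  and m1: "m1 \<in> Lam" and m2: "m2 \<in> Lam" and le: "m1 \<le> m2"
  and ne: "G m1 \<noteq> G m2"
  and two: "\<forall>m\<in>{m1..m2}. G m = G m1 \<or> G m = G m2"
  shows "\<exists>s\<in>{m1..m2}. indiff (P s) (G m1) (G m2)"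
proof -
  define a where "a = G m1"
  define c where "c = G m2"
  have IL: "x \<in> Lam" if "x \<in> {m1..m2}" for x using conv[OF m1 m2] that by auto
  have ac: "lessZ a c" using mono[OF m1 m2 le] ne leZ_less unfolding a_def c_def by blast
  define K where "K = {m \<in> {m1..m2}. G m = a}"
  define s where "s = Sup K"
  have m1K: "m1 \<in> K" using le by (auto simp: K_def a_def)
  have bdd: "bdd_above K" unfolding K_def by (rule bdd_aboveI[of _ m2]) auto
  have s1: "m1 \<le> s" unfolding s_def using cSup_upper[OF m1K bdd] .
  have s2: "s \<le> m2" unfolding s_def by (rule cSup_least) (use m1K in \<open>auto simp: K_def\<close>)
  have sI: "s \<in> {m1..m2}" using s1 s2 by auto
  have below: "G x = a" if xa: "m1 \<le> x" "x < s" for x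
  proof -
    obtain k where k: "k \<in> K" "x < k" using less_cSup_iff[of K x] m1K bdd xa unfolding s_def by auto
    have kI: "k \<in> {m1..m2}" and Gk: "G k = a" using k by (auto simp: K_def)
    have xI: "x \<in> {m1..m2}" using xa kI k by auto
    have "leZ (G x) a" using mono[OF IL[OF xI] IL[OF kI]] k Gk by auto
    moreover have "G x = a \<or> G x = c" using two xI unfolding a_def c_def by auto
    ultimately show ?thesis using ac unfolding leZ_def lessZ_def by auto
  qed
  have above: "G x = c" if "s < x" "x \<le> m2" for x
  proof -
    have xI: "x \<in> {m1..m2}" using that s1 by auto
    have "x \<notin> K" using cSup_upper[of x K] bdd that unfolding s_def by auto
    then show ?thesis using two xI unfolding K_def a_def c_def by auto
  qed
  show ?thesis
  proof (cases "G s = a")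
    case True
    have sm2: "s < m2" using s2 True ne unfolding a_def by (cases "s = m2") auto
    define nu where "nu = (\<lambda>n. s + (m2 - s) * inverse (real (Suc n)))"
    have nuI: "s < nu n \<and> nu n \<le> m2" for n
    proof -
      have "0 < (m2 - s) * inverse (real (Suc n))" using inv_suc_props(1)[of n] sm2 by (intro mult_pos_pos) auto
      moreover have "(m2 - s) * inverse (real (Suc n)) \<le> (m2 - s) * 1"
        using inv_suc_props(2)[of n] sm2 by (intro mult_left_mono) auto
      ultimately show ?thesis unfolding nu_def by auto
    qed
    have nuL: "nu n \<in> Lam" for n using nuI[of n] s1 by (intro IL) auto
    have dec: "decseq nu" unfolding decseq_Suc_iff nu_def
      using inv_suc_props(3) sm2 by (auto intro!: mult_left_mono)
    have lim: "nu \<longlonglongrightarrow> s" unfolding nu_def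
      using tendsto_add[OF tendsto_const tendsto_mult[OF tendsto_const LIMSEQ_inverse_real_of_nat]] by simp
    obtain L where L: "(\<lambda>n. G (nu n)) \<longlonglongrightarrow> L" "indiff (P s) L (G s)"
      using cont[OF IL[OF sI]] nuL dec lim by blast
    have "(\<lambda>n. G (nu n)) = (\<lambda>n. c)" using above nuI by auto
    then have "L = c" using L(1) LIMSEQ_unique[OF tendsto_const] by metis
    then show ?thesis using L(2) True sI unfolding indiff_def a_def c_def by auto
  next
    case False
    then have Gs: "G s = c" using two sI unfolding a_def c_def by auto
    have sm1: "m1 < s" using s1 Gs ne unfolding c_def by (cases "s = m1") auto
    define nu where "nu = (\<lambda>n. s - (s - m1) * inverse (real (Suc n)))"
    have nuI: "m1 \<le> nu n \<and> nu n < s" for n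
    proof -
      have "0 < (s - m1) * inverse (real (Suc n))" using inv_suc_props(1)[of n] sm1 by (intro mult_pos_pos) auto
      moreover have "(s - m1) * inverse (real (Suc n)) \<le> (s - m1) * 1"
        using inv_suc_props(2)[of n] sm1 by (intro mult_left_mono) auto
      ultimately show ?thesis unfolding nu_def by auto
    qed
    have nuL: "nu n \<in> Lam" for n using nuI[of n] s2 by (intro IL) auto
    have inc: "incseq nu" unfolding incseq_Suc_iff nu_def
      using inv_suc_props(3) sm1 by (auto intro!: mult_left_mono)
    have lim: "nu \<longlonglongrightarrow> s" unfolding nu_def
      using tendsto_diff[OF tendsto_const tendsto_mult[OF tendsto_const LIMSEQ_inverse_real_of_nat]] by simp
    obtain L where L: "(\<lambda>n. G (nu n)) \<longlonglongrightarrow> L" "indiff (P s) L (G s)"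
      using cont[OF IL[OF sI]] nuL inc lim by blast
    have "(\<lambda>n. G (nu n)) = (\<lambda>n. a)" using below nuI by auto
    then have "L = a" using L(1) LIMSEQ_unique[OF tendsto_const] by metis
    then show ?thesis using L(2) Gs sI unfolding indiff_def a_def c_def by auto
  qed
qed



lemma main_real:
  fixes Lam :: "real set" and P :: "real \<Rightarrow> pref" and G :: "real \<Rightarrow> bndl"
  assumes conv: "\<And>a b c. a\<in>Lam \<Longrightarrow> b\<in>Lam \<Longrightarrow> a\<le>c \<Longrightarrow> c\<le>b \<Longrightarrow> c\<in>Lam"
  and cl: "\<And>m. m\<in>Lam \<Longrightarrow> classical (P m)"
  and GZ: "\<And>m. m\<in>Lam \<Longrightarrow> G m \<in> ZZ"
  and T1: "\<And>m m' x z. m\<in>Lam \<Longrightarrow> m'\<in>Lam \<Longrightarrow> m \<le> m' \<Longrightarrow> lessZ x z \<Longrightarrow> P m' x z \<Longrightarrow> P m x z"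
  and T2: "\<And>m m' x z. m\<in>Lam \<Longrightarrow> m'\<in>Lam \<Longrightarrow> m < m' \<Longrightarrow> lessZ x z \<Longrightarrow> indiff (P m) x z \<Longrightarrow> \<not> P m' x z"
  and mono: "\<And>m m'. m\<in>Lam \<Longrightarrow> m'\<in>Lam \<Longrightarrow> m \<le> m' \<Longrightarrow> leZ (G m) (G m')"
  and fin: "finite (G ` Lam)"
  and cont: "\<And>m nu. m\<in>Lam \<Longrightarrow> (\<forall>n. nu n \<in> Lam) \<Longrightarrow> (incseq nu \<or> decseq nu) \<Longrightarrow> nu \<longlonglongrightarrow> m
       \<Longrightarrow> \<exists>L. (\<lambda>n. G (nu n)) \<longlonglongrightarrow> L \<and> indiff (P m) L (G m)"
  shows "m1\<in>Lam \<Longrightarrow> m2\<in>Lam \<Longrightarrow> m1 \<le> m2 \<Longrightarrow> P m1 (G m1) (G m2) \<and> P m2 (G m2) (G m1)"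
proof -
  have IL: "x \<in> Lam" if "m1 \<in> Lam" "m2 \<in> Lam" "m1 \<le> x" "x \<le> m2" for m1 m2 x
    using conv that by blast
  have key: "\<forall>m1 m2. card (G ` {m1..m2}) = n \<longrightarrow> m1\<in>Lam \<longrightarrow> m2\<in>Lam \<longrightarrow> m1 \<le> m2 \<longrightarrow>
      P m1 (G m1) (G m2) \<and> P m2 (G m2) (G m1)" for n
  proof (induction n rule: less_induct)
    case (less n)
    show ?case
    proof (intro allI impI)
      fix m1 m2 assume cn: "card (G ` {m1..m2}) = n" and m1: "m1 \<in> Lam" and m2: "m2 \<in> Lam" and le: "m1 \<le> m2"
      define a where "a = G m1"
      define c where "c = G m2"
      have aZ: "a \<in> ZZ" and cZ: "c \<in> ZZ" using GZ m1 m2 by (auto simp: a_def c_def)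
      have finI: "finite (G ` {m1..m2})"
        by (rule finite_subset[OF _ fin]) (use IL[OF m1 m2] in auto)
      show "P m1 (G m1) (G m2) \<and> P m2 (G m2) (G m1)"
      proof (cases "a = c")
        case True
        then show ?thesis using cl_refl[OF cl[OF m1] aZ] cl_refl[OF cl[OF m2] aZ] by (simp add: a_def c_def)
      next
        case False
        have ac: "lessZ a c" using mono[OF m1 m2 le] False leZ_less unfolding a_def c_def by blast
        show ?thesis
        proof (cases "\<exists>m\<in>{m1..m2}. G m \<noteq> a \<and> G m \<noteq> c")
          case True
          then obtain m where mI: "m \<in> {m1..m2}" and na: "G m \<noteq> a" and nc: "G m \<noteq> c" by blast
          define b where "b = G m"
          have mL: "m \<in> Lam" using IL[OF m1 m2] mI by auto
          have bZ: "b \<in> ZZ" using GZ[OF mL] by (simp add: b_def)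
          have ab: "lessZ a b" using mono[OF m1 mL] mI na leZ_less unfolding a_def b_def by auto
          have bc: "lessZ b c" using mono[OF mL m2] mI nc leZ_less unfolding c_def b_def by auto
          have c1: "card (G ` {m1..m}) < n"
          proof -
            have "G ` {m1..m} \<subseteq> G ` {m1..m2}" using mI by auto
            moreover have "c \<notin> G ` {m1..m}"
            proof
              assume "c \<in> G ` {m1..m}"
              then obtain x where x: "x \<in> {m1..m}" "G x = c" by auto
              have "leZ c b" using mono[OF IL[OF m1 mL] mL] x unfolding b_def by auto
              then show False using bc unfolding leZ_def lessZ_def by auto
            qed
            moreover have "c \<in> G ` {m1..m2}" using le by (auto simp: c_def)
            ultimately have "G ` {m1..m} \<subset> G ` {m1..m2}" by blast
            then show ?thesis using psubset_card_mono[OF finI] cn by simp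
          qed
          have c2: "card (G ` {m..m2}) < n"
          proof -
            have "G ` {m..m2} \<subseteq> G ` {m1..m2}" using mI by auto
            moreover have "a \<notin> G ` {m..m2}"
            proof
              assume "a \<in> G ` {m..m2}"
              then obtain x where x: "x \<in> {m..m2}" "G x = a" by auto
              have "leZ b a" using mono[OF mL IL[OF mL m2]] x unfolding b_def by auto
              then show False using ab unfolding leZ_def lessZ_def by auto
            qed
            moreover have "a \<in> G ` {m1..m2}" using le by (auto simp: a_def)
            ultimately have "G ` {m..m2} \<subset> G ` {m1..m2}" by blast
            then show ?thesis using psubset_card_mono[OF finI] cn by simp
          qed
          have IH1: "P m1 a b \<and> P m b a" using less.IH[OF c1] m1 mL mI unfolding a_def b_def by auto
          have IH2: "P m b c \<and> P m2 c b" using less.IH[OF c2] mL m2 mI unfolding c_def b_def by auto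
          have p1: "P m1 b c" using T1[OF m1 mL _ bc] IH2 mI by auto
          have p2: "P m2 b a"
          proof (cases "P m a b")
            case True
            have mm2: "m < m2" using mI nc unfolding c_def by (cases "m = m2") auto
            have "\<not> P m2 a b" using T2[OF mL m2 mm2 ab] True IH1 unfolding indiff_def by auto
            then show ?thesis using cl_complete[OF cl[OF m2] aZ bZ] by auto
          next
            case False
            then have "\<not> P m2 a b" using T1[OF mL m2 _ ab] mI by auto
            then show ?thesis using cl_complete[OF cl[OF m2] aZ bZ] by auto
          qed
          show ?thesis using cl_trans[OF cl[OF m1]] cl_trans[OF cl[OF m2]] IH1 IH2 p1 p2
            unfolding a_def c_def by blast
        next
          case False
          then have two: "\<forall>m\<in>{m1..m2}. G m = G m1 \<or> G m = G m2" unfolding a_def c_def by blast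
          have ex: "\<exists>s\<in>{m1..m2}. indiff (P s) (G m1) (G m2)"
            apply (rule switch_lemma[where Lam=Lam and G=G and P=P])
                   apply (fact conv)
                  apply (fact mono)
                 apply (fact cont)
            using m1 m2 le \<open>a \<noteq> c\<close> two by (auto simp: a_def c_def)
          obtain s where sI: "s \<in> {m1..m2}" and sind: "indiff (P s) a c"
            using ex unfolding a_def c_def by blast
          have sL: "s \<in> Lam" using IL[OF m1 m2] sI by auto
          have q1: "P m1 a c"
          proof (cases "s = m1")
            case True then show ?thesis using sind unfolding indiff_def by simp
          next
            case False
            then show ?thesis using T1[OF m1 sL _ ac] sI sind unfolding indiff_def by auto
          qed
          have q2: "P m2 c a"
          proof (cases "s = m2")
            case True then show ?thesis using sind unfolding indiff_def by simp
          next
            case False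
            then have "s < m2" using sI by auto
            then have "\<not> P m2 a c" using T2[OF sL m2 _ ac sind] by auto
            then show ?thesis using cl_complete[OF cl[OF m2] aZ cZ] by auto
          qed
          show ?thesis using q1 q2 unfolding a_def c_def by simp
        qed
      qed
    qed
  qed
  show "m1\<in>Lam \<Longrightarrow> m2\<in>Lam \<Longrightarrow> m1 \<le> m2 \<Longrightarrow> P m1 (G m1) (G m2) \<and> P m2 (G m2) (G m1)"
    using key by blast
qed



definition lam :: "pref \<Rightarrow> real" where
  "lam R = (THE l. -1 < l \<and> l < 1 \<and> indiff R (gam 0 l) (1,1))"

lemma one_ZZ: "((1::real),(1::real)) \<in> ZZ" by (simp add: ZZ_def)

lemma lam_prop:
  assumes R: "classical R"
  shows "-1 < lam R \<and> lam R < 1 \<and> indiff R (gam 0 (lam R)) (1,1)"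
proof -
  obtain l where l: "- 1 < l" "l < 1 - 0" "indiff R (gam 0 l) (1,1)"
    using gam_root[OF R one_ZZ, of 0] by auto
  have "\<exists>!l. -1 < l \<and> l < 1 \<and> indiff R (gam 0 l) (1,1)"
    using l gam_uniq[OF R, of 0] by (intro ex1I[of _ l]) auto
  then show ?thesis unfolding lam_def by (rule theI')
qed

lemma lam_eq:
  assumes R: "classical R" and I: "indiff R (gam 0 l) (1,1)"
  shows "lam R = l"
  using gam_uniq[OF R _ I] lam_prop[OF R] by auto

lemma gam0_less: "-1 < l \<Longrightarrow> l < 1 \<Longrightarrow> lessZ (gam 0 l) (1,1)"
  by (auto simp: gam_def lessZ_def)

context
  fixes D :: "pref set"
  assumes rsc: "rich_single_crossing D"
begin

lemma D_cl: "R \<in> D \<Longrightarrow> classical R"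
  using rsc unfolding rich_single_crossing_def by blast

lemma same_pair:
  assumes R: "R \<in> D" and R': "R' \<in> D" and x: "x \<in> ZZ" and y: "y \<in> ZZ" and ne: "x \<noteq> y"
    and I: "indiff R x y" and I': "indiff R' x y"
  shows "R = R'"
proof (rule ccontr)
  assume "R \<noteq> R'"
  then have sc: "single_crossing R R'" using rsc R R' unfolding rich_single_crossing_def by blast
  have "indiff R y y" "indiff R' y y" using cl_refl[OF D_cl[OF R] y] cl_refl[OF D_cl[OF R'] y]
    by (auto simp: indiff_def)
  then show False using sc x y I I' ne unfolding single_crossing_def by blast
qed

lemma lam_inj:
  assumes R: "R \<in> D" and R': "R' \<in> D" and eq: "lam R = lam R'"
  shows "R = R'"
proof -
  have p: "-1 < lam R \<and> lam R < 1 \<and> indiff R (gam 0 (lam R)) (1,1)" using lam_prop[OF D_cl[OF R]] .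
  have p': "indiff R' (gam 0 (lam R)) (1,1)" using lam_prop[OF D_cl[OF R']] eq by simp
  have gZ: "gam 0 (lam R) \<in> ZZ" using p cl_ZZ[OF D_cl[OF R]] unfolding indiff_def by blast
  have "gam 0 (lam R) \<noteq> (1,1)" using gam0_less[of "lam R"] p unfolding lessZ_def by auto
  then show ?thesis using same_pair[OF R R' gZ one_ZZ] p p' by blast
qed

lemma prec_lam:
  assumes R: "R \<in> D" and R': "R' \<in> D" and pr: "prec R R'"
  shows "lam R < lam R'"
proof -
  have cR: "classical R" and cR': "classical R'" using D_cl R R' by auto
  have p: "-1 < lam R \<and> lam R < 1 \<and> indiff R (gam 0 (lam R)) (1,1)" using lam_prop[OF cR] .
  have p': "-1 < lam R' \<and> lam R' < 1 \<and> indiff R' (gam 0 (lam R')) (1,1)" using lam_prop[OF cR'] .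
  define x where "x = gam 0 (lam R')"
  have xZ: "x \<in> ZZ" using p' cl_ZZ[OF cR'] unfolding indiff_def x_def by blast
  have xb: "x \<in> boxZ (1,1)" using xZ gam0_less[of "lam R'"] p' unfolding boxZ_def leZ_def x_def by auto
  have "R x (1,1)"
    using pr xb p' one_ZZ unfolding prec_def x_def indiff_def by blast
  then have "R (gam 0 (lam R')) (gam 0 (lam R))"
    using p cl_trans[OF cR] unfolding indiff_def x_def by blast
  moreover have gZ: "gam 0 (lam R) \<in> ZZ" using p cl_ZZ[OF cR] unfolding indiff_def by blast
  ultimately have "\<not> lam R' < lam R" using gam_strict[OF cR, of 0 "lam R'" "lam R"] by auto
  moreover have "R \<noteq> R'" using pr unfolding prec_def by simp
  ultimately show ?thesis using lam_inj[OF R R'] by force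
qed

lemma lam_prec:
  assumes R: "R \<in> D" and R': "R' \<in> D" and lt: "lam R < lam R'"
  shows "prec R R'"
proof -
  have ne: "R \<noteq> R'" using lt by auto
  have sc: "single_crossing R R'" using rsc R R' ne unfolding rich_single_crossing_def by blast
  from prec_lin[OF D_cl[OF R] D_cl[OF R'] sc ne] show ?thesis
    using prec_lam[OF R' R] lt by auto
qed

lemma preceq_iff:
  assumes R: "R \<in> D" and R': "R' \<in> D"
  shows "preceq R R' \<longleftrightarrow> lam R \<le> lam R'"
  using prec_lam[OF R R'] lam_prec[OF R R'] lam_inj[OF R R'] unfolding preceq_def by force

lemma lam_surj:
  assumes "-1 < l" "l < 1"
  shows "\<exists>R\<in>D. lam R = l"
proof -
  have gZ: "gam 0 l \<in> ZZ" using assms by (intro gam_ZZ) auto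
  obtain R where R: "R \<in> D" "indiff R (gam 0 l) (1,1)"
    using rsc gZ one_ZZ gam0_less[OF assms] unfolding rich_single_crossing_def by blast
  then show ?thesis using lam_eq[OF D_cl[OF R(1)]] by blast
qed

lemma T2_D:
  assumes R: "R \<in> D" and R': "R' \<in> D" and pr: "prec R R'"
    and xZ: "x \<in> ZZ" and zZ: "z \<in> ZZ" and xz: "lessZ x z" and I: "indiff R x z"
  shows "\<not> R' x z"
proof
  assume a: "R' x z"
  have cR: "classical R" and cR': "classical R'" using D_cl R R' by auto
  have ne: "R \<noteq> R'" using pr unfolding prec_def by simp
  have nzx: "\<not> R' z x"
  proof
    assume "R' z x"
    then have "indiff R' x z" using a by (simp add: indiff_def)
    moreover have "x \<noteq> z" using xz by (auto simp: lessZ_def)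
    ultimately show False using same_pair[OF R R' xZ zZ _ I] ne by blast
  qed
  define xs where "xs = (\<lambda>n. (fst x + inverse (real (Suc n)), snd x))"
  have xsZ: "xs n \<in> ZZ" for n
    using xZ by (cases x) (auto simp: xs_def ZZ_def intro: add_nonneg_nonneg)
  have lim: "xs \<longlonglongrightarrow> x"
  proof -
    have "(\<lambda>n. (fst x + inverse (real (Suc n)), snd x)) \<longlonglongrightarrow> (fst x + 0, snd x)"
      by (intro tendsto_Pair tendsto_add tendsto_const LIMSEQ_inverse_real_of_nat)
    then show ?thesis by (simp add: xs_def)
  qed
  have e1: "eventually (\<lambda>n. \<not> R' z (xs n)) sequentially" by (rule cl_ev2[OF cR' zZ xsZ lim nzx])
  have "(\<lambda>n. fst (xs n)) \<longlonglongrightarrow> fst x" using lim by (rule tendsto_fst)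
  then have e2: "eventually (\<lambda>n. fst (xs n) < fst z) sequentially"
    using xz unfolding lessZ_def by (intro order_tendstoD) auto
  from eventually_conj[OF e1 e2] obtain n where n1: "\<not> R' z (xs n)" and n2: "fst (xs n) < fst z"
    using eventually_sequentially by auto
  have "R' (xs n) z" using n1 cl_complete[OF cR' xsZ zZ] by blast
  moreover have "xs n \<in> boxZ z" using xsZ n2 xz unfolding boxZ_def leZ_def lessZ_def xs_def by auto
  ultimately have "R (xs n) z" using pr zZ unfolding prec_def by blast
  then have "R (xs n) x" using I cl_trans[OF cR] unfolding indiff_def by blast
  moreover have "\<not> R (xs n) x"
    by (rule cl_dom_strict[OF cR xZ xsZ]) (auto simp: xs_def prod_eq_iff)
  ultimately show False by simp
qed

end



theorem mainTheorem8:
  fixes D S :: "pref set" and F :: "pref \<Rightarrow> bndl"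
  assumes "rich_single_crossing D"
    and "S = D \<or> (\<exists>Rlo\<in>D. \<exists>Rhi\<in>D. S = closed_interval D Rlo Rhi)"
    and "mechanism S F"
    and "monotone_mech S F"
    and "VF_continuous S F"
    and "finite (F ` S)"
  shows "strategy_proof S F"
proof -
  note rsc = assms(1)
  have SD: "S \<subseteq> D" using assms(2) unfolding closed_interval_def by auto
  define Lam where "Lam = lam ` S"
  define inv where "inv = (\<lambda>m. SOME R. R \<in> S \<and> lam R = m)"
  have inv1: "inv m \<in> S \<and> lam (inv m) = m" if "m \<in> Lam" for m
    using that unfolding Lam_def inv_def by (metis (mono_tags, lifting) imageE someI)
  have inv2: "inv (lam R) = R" if "R \<in> S" for R
  proof -
    have "lam R \<in> Lam" using that by (simp add: Lam_def)
    then have "inv (lam R) \<in> S" "lam (inv (lam R)) = lam R" using inv1 by auto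
    then show ?thesis using lam_inj[OF rsc] that SD by blast
  qed
  define G where "G = (\<lambda>m. F (inv m))"
  have invD: "inv m \<in> D" if "m \<in> Lam" for m using inv1[OF that] SD by auto
  have conv: "c \<in> Lam" if a: "a \<in> Lam" and b: "b \<in> Lam" and ac: "a \<le> c" and cb: "c \<le> b" for a b c
  proof -
    obtain Ra where Ra: "Ra \<in> S" "lam Ra = a" using a unfolding Lam_def by auto
    obtain Rb where Rb: "Rb \<in> S" "lam Rb = b" using b unfolding Lam_def by auto
    have "-1 < c" "c < 1" using lam_prop[OF D_cl[OF rsc]] Ra Rb SD ac cb by force+
    then obtain R where R: "R \<in> D" "lam R = c" using lam_surj[OF rsc] by blast
    have "R \<in> S"
      using assms(2)
    proof
      assume "S = D" then show ?thesis using R by simp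
    next
      assume "\<exists>Rlo\<in>D. \<exists>Rhi\<in>D. S = closed_interval D Rlo Rhi"
      then obtain Rlo Rhi where lo: "Rlo \<in> D" and hi: "Rhi \<in> D" and Se: "S = closed_interval D Rlo Rhi" by blast
      have "preceq Rlo Ra" "preceq Rb Rhi" using Ra Rb Se unfolding closed_interval_def by auto
      then have "lam Rlo \<le> a" "b \<le> lam Rhi"
        using preceq_iff[OF rsc lo] preceq_iff[OF rsc _ hi] Ra Rb SD by auto
      then have "preceq Rlo R" "preceq R Rhi"
        using preceq_iff[OF rsc lo R(1)] preceq_iff[OF rsc R(1) hi] R ac cb by auto
      then show ?thesis using Se R unfolding closed_interval_def by auto
    qed
    then show ?thesis using R unfolding Lam_def by force
  qed
  have cl: "classical (inv m)" if "m \<in> Lam" for m using D_cl[OF rsc invD[OF that]] .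
  have GZ: "G m \<in> ZZ" if "m \<in> Lam" for m
    using assms(3) inv1[OF that] unfolding mechanism_def G_def by auto
  have precI: "prec (inv m) (inv m')" if "m \<in> Lam" "m' \<in> Lam" "m < m'" for m m'
    using lam_prec[OF rsc invD[OF that(1)] invD[OF that(2)]] inv1 that by auto
  have T1: "inv m x z" if m: "m \<in> Lam" and m': "m' \<in> Lam" and le: "m \<le> m'" and xz: "lessZ x z"
      and h: "inv m' x z" for m m' x z
  proof (cases "m = m'")
    case True then show ?thesis using h by simp
  next
    case False
    then have pr: "prec (inv m) (inv m')" using precI[OF m m'] le by auto
    have xZ: "x \<in> ZZ" and zZ: "z \<in> ZZ" using cl_ZZ[OF cl[OF m'] h] by auto
    have "x \<in> boxZ z" using xZ xz unfolding boxZ_def leZ_def by auto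
    then show ?thesis using pr h zZ unfolding prec_def by blast
  qed
  have T2: "\<not> inv m' x z" if m: "m \<in> Lam" and m': "m' \<in> Lam" and lt: "m < m'" and xz: "lessZ x z"
      and I: "indiff (inv m) x z" for m m' x z
  proof -
    have "inv m x z" using I unfolding indiff_def by simp
    then have xZ: "x \<in> ZZ" and zZ: "z \<in> ZZ" using cl_ZZ[OF cl[OF m]] by blast+
    show ?thesis by (rule T2_D[OF rsc invD[OF m] invD[OF m'] precI[OF m m' lt] xZ zZ xz I])
  qed
  have mono: "leZ (G m) (G m')" if m: "m \<in> Lam" and m': "m' \<in> Lam" and le: "m \<le> m'" for m m'
  proof (cases "m = m'")
    case True then show ?thesis by (simp add: leZ_def)
  next
    case False
    then have "prec (inv m) (inv m')" using precI[OF m m'] le by auto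
    then show ?thesis using assms(4) inv1[OF m] inv1[OF m'] unfolding monotone_mech_def G_def by blast
  qed
  have fin: "finite (G ` Lam)"
  proof -
    have "G ` Lam = F ` S" unfolding G_def Lam_def using inv2 by (auto simp: image_iff)
    then show ?thesis using assms(6) by simp
  qed
  have cont: "\<exists>L. (\<lambda>n. G (nu n)) \<longlonglongrightarrow> L \<and> indiff (inv m) L (G m)"
    if m: "m \<in> Lam" and nuL: "\<forall>n. nu n \<in> Lam" and mon: "incseq nu \<or> decseq nu" and lim: "nu \<longlonglongrightarrow> m"
    for m nu
  proof -
    define Rs where "Rs = (\<lambda>n. inv (nu n))"
    have RsS: "\<forall>n. Rs n \<in> S" using inv1 nuL unfolding Rs_def by auto
    have lRs: "lam (Rs n) = nu n" for n using inv1 nuL unfolding Rs_def by auto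
    have RsD: "Rs n \<in> D" for n using RsS SD by auto
    have ms: "monotone_seq Rs"
      using mon
    proof
      assume "incseq nu"
      then have "\<forall>n. preceq (Rs n) (Rs (Suc n))"
        using preceq_iff[OF rsc RsD RsD] lRs unfolding incseq_Suc_iff by auto
      then show ?thesis unfolding monotone_seq_def by blast
    next
      assume "decseq nu"
      then have "\<forall>n. preceq (Rs (Suc n)) (Rs n)"
        using preceq_iff[OF rsc RsD RsD] lRs unfolding decseq_Suc_iff by auto
      then show ?thesis unfolding monotone_seq_def by blast
    qed
    have mS: "inv m \<in> S" and lm: "lam (inv m) = m" using inv1[OF m] by auto
    have mD: "inv m \<in> D" using mS SD by auto
    have oc: "order_converges S Rs (inv m)"
      unfolding order_converges_def
    proof (intro conjI ballI impI)
      fix A assume AS: "A \<in> S" and pA: "prec A (inv m)"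
      have AD: "A \<in> D" using AS SD by auto
      have "lam A < m" using prec_lam[OF rsc AD mD pA] lm by simp
      then have "eventually (\<lambda>n. lam A < nu n) sequentially" by (rule order_tendstoD(1)[OF lim])
      then obtain N where "\<forall>n\<ge>N. lam A < nu n" unfolding eventually_sequentially by blast
      then show "\<exists>N. \<forall>n\<ge>N. prec A (Rs n)" using lam_prec[OF rsc AD RsD] lRs by auto
    next
      fix B assume BS: "B \<in> S" and pB: "prec (inv m) B"
      have BD: "B \<in> D" using BS SD by auto
      have "m < lam B" using prec_lam[OF rsc mD BD pB] lm by simp
      then have "eventually (\<lambda>n. nu n < lam B) sequentially" by (rule order_tendstoD(2)[OF lim])
      then obtain N where "\<forall>n\<ge>N. nu n < lam B" unfolding eventually_sequentially by blast
      then show "\<exists>N. \<forall>n\<ge>N. prec (Rs n) B" using lam_prec[OF rsc RsD BD] lRs by auto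
    qed
    obtain L where "L \<in> ZZ" "(\<lambda>n. F (Rs n)) \<longlonglongrightarrow> L" "indiff (inv m) L (F (inv m))"
      using assms(5) mS RsS ms oc unfolding VF_continuous_def by blast
    then show ?thesis unfolding G_def Rs_def by blast
  qed
  have MR: "inv m1 (G m1) (G m2) \<and> inv m2 (G m2) (G m1)"
    if "m1 \<in> Lam" "m2 \<in> Lam" "m1 \<le> m2" for m1 m2
    apply (rule main_real[where Lam=Lam and P=inv and G=G])
               apply (fact conv)
              apply (fact cl)
             apply (fact GZ)
            apply (fact T1)
           apply (fact T2)
          apply (fact mono)
         apply (fact fin)
        apply (fact cont)
    using that by auto
  show ?thesis
    unfolding strategy_proof_def
  proof (intro ballI)
    fix R1 R2 assume R1: "R1 \<in> S" and R2: "R2 \<in> S"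
    have l1: "lam R1 \<in> Lam" and l2: "lam R2 \<in> Lam" using R1 R2 by (auto simp: Lam_def)
    have "inv (lam R1) (G (lam R1)) (G (lam R2))"
    proof (cases "lam R1 \<le> lam R2")
      case True then show ?thesis using MR[OF l1 l2] by blast
    next
      case False then show ?thesis using MR[OF l2 l1] by auto
    qed
    then show "R1 (F R1) (F R2)" using inv2[OF R1] inv2[OF R2] unfolding G_def by simp
  qed
qed


end
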